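(* Let $f:\mathbf{R}^d\times A\to\mathbf{R}^d$ be bounded with $\|f(x,a)\|\le M$ for all states $x$ and actions $a\in A$, Lipschitz continuous in the state, $\|f(x,a)-f(x',a)\|\le L\|x-x'\|$, and approximately odd in the action: $f(x,-a)=-f(x,a)+\epsilon(x,a)$ with $\|\epsilon(x,a)\|\le E$ for all $x,a$. Let $\nu>0$, $T\in\mathbf{N}$, and let $x_T(0),\dots,x_T(2T)$ be generated by Euler's method $x_T(k+1)=x_T(k)+\nu f(x_T(k),a_T(k))$ with actions $a_T(0),\dots,a_T(2T-1)\in A$ satisfying $a_T(T+k)=-a_T(T-1-k)$ for $k=0,\dots,T-1$. Then $$\|x_T(0)-x_T(2T)\|\le\left(\nu M+\frac{E}{L}\right)\left[e^{TL\nu}-1\right].$$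
   Context: This models discretized teleoperation with a learned action map $f$: $x_T(k)\in\mathbf{R}^d$ is the robot state at step $k$, $a_T(k)$ the user's action (from a bounded action set $A$ closed under negation), and $\nu>0$ the update rate; $\epsilon$ is the residual error by which the map fails to be exactly odd in the action. *)

theory Defs
  imports "HOL-Analysis.Analysis"
begin

end

theory Submission
  imports Defs
begin

theorem corollary1:
  fixes f :: "('s::euclidean_space) \<Rightarrow> ('b::real_normed_vector) \<Rightarrow> 's"
    and eps :: "'s \<Rightarrow> 'b \<Rightarrow> 's"
    and A :: "'b set"
    and M L E \<nu> :: real
    and T :: nat
    and x :: "nat \<Rightarrow> 's"
    and a :: "nat \<Rightarrow> 'b"
  assumes A_bounded: "bounded A"
    and A_neg: "\<forall>b\<in>A. - b \<in> A"
    and f_bound: "\<forall>y. \<forall>b\<in>A. norm (f y b) \<le> M"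
    and f_lip: "\<forall>y y'. \<forall>b\<in>A. norm (f y b - f y' b) \<le> L * norm (y - y')"
    and L_pos: "L > 0"
    and f_odd: "\<forall>y. \<forall>b\<in>A. f y (- b) = - f y b + eps y b"
    and eps_bound: "\<forall>y. \<forall>b\<in>A. norm (eps y b) \<le> E"
    and nu_pos: "\<nu> > 0"
    and actions: "\<forall>k<2*T. a k \<in> A"
    and euler: "\<forall>k<2*T. x (Suc k) = x k + \<nu> *\<^sub>R f (x k) (a k)"
    and reversal: "\<forall>k<T. a (T + k) = - a (T - 1 - k)"
  shows "norm (x 0 - x (2*T)) \<le> (\<nu> * M + E / L) * (exp (real T * L * \<nu>) - 1)"
proof (cases "T = 0")
  case True
  then show ?thesis by simp
next
  case False
  have a0: "a 0 \<in> A" using actions False by auto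
  have M0: "M \<ge> 0" using f_bound a0 norm_ge_zero order_trans by blast
  have E0: "E \<ge> 0" using eps_bound a0 norm_ge_zero order_trans by blast
  define C where "C = \<nu> * M + E / L"
  have C0: "C \<ge> 0" unfolding C_def using M0 E0 nu_pos L_pos by auto
  define q where "q = 1 + \<nu> * L"
  have q1: "q \<ge> 1" unfolding q_def using nu_pos L_pos by auto
  have main: "j \<le> T \<Longrightarrow> norm (x (T + j) - x (T - j)) \<le> C * (q ^ j - 1)" for j
  proof (induction j)
    case 0
    then show ?case by simp
  next
    case (Suc j)
    hence jT: "j < T" by simp
    define b where "b = a (T - 1 - j)"
    have bA: "b \<in> A" unfolding b_def using actions jT by auto
    have e1: "x (T - j) = x (T - Suc j) + \<nu> *\<^sub>R f (x (T - Suc j)) b"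
    proof -
      have "Suc (T - 1 - j) = T - j" using jT by simp
      moreover have "T - 1 - j < 2*T" using jT by simp
      ultimately show ?thesis using euler b_def by (metis diff_diff_left plus_1_eq_Suc)
    qed
    have e2: "x (T + Suc j) = x (T + j) + \<nu> *\<^sub>R f (x (T + j)) (- b)"
      using euler reversal jT b_def by (metis add_Suc_right add_less_cancel_left less_trans_Suc mult_2 trans_less_add1)
    have od: "f (x (T + j)) (- b) = - f (x (T + j)) b + eps (x (T + j)) b"
      using f_odd bA by auto
    define d where "d = x (T + j) - x (T - j)"
    have IH: "norm d \<le> C * (q ^ j - 1)" using Suc d_def by simp
    have diff: "x (T + Suc j) - x (T - Suc j) = d + \<nu> *\<^sub>R (f (x (T - Suc j)) b - f (x (T + j)) b) + \<nu> *\<^sub>R eps (x (T + j)) b"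
      unfolding d_def using e1 e2 od by (simp add: algebra_simps)
    have n1: "norm (f (x (T - Suc j)) b - f (x (T + j)) b) \<le> L * norm (x (T - Suc j) - x (T + j))"
      using f_lip bA by blast
    have n2: "norm (x (T - Suc j) - x (T + j)) \<le> \<nu> * M + norm d"
    proof -
      have "x (T - Suc j) - x (T + j) = - (\<nu> *\<^sub>R f (x (T - Suc j)) b) - d"
        unfolding d_def using e1 by (simp add: algebra_simps)
      hence "norm (x (T - Suc j) - x (T + j)) \<le> norm (\<nu> *\<^sub>R f (x (T - Suc j)) b) + norm d"
        by (metis norm_minus_cancel norm_triangle_ineq4)
      moreover have "norm (\<nu> *\<^sub>R f (x (T - Suc j)) b) \<le> \<nu> * M"
        using f_bound bA nu_pos by (simp add: mult_left_mono)
      ultimately show ?thesis by simp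
    qed
    have n3: "norm (eps (x (T + j)) b) \<le> E" using eps_bound bA by blast
    have "norm (x (T + Suc j) - x (T - Suc j)) \<le> norm d + \<nu> * norm (f (x (T - Suc j)) b - f (x (T + j)) b) + \<nu> * norm (eps (x (T + j)) b)"
      unfolding diff using nu_pos by (metis (no_types, lifting) abs_of_pos norm_scaleR norm_triangle_le norm_triangle_ineq add_mono order_refl)
    also have "\<dots> \<le> norm d + \<nu> * (L * (\<nu> * M + norm d)) + \<nu> * E"
    proof -
      have "L * norm (x (T - Suc j) - x (T + j)) \<le> L * (\<nu> * M + norm d)"
        using n2 L_pos by (simp add: mult_left_mono)
      hence "\<nu> * norm (f (x (T - Suc j)) b - f (x (T + j)) b) \<le> \<nu> * (L * (\<nu> * M + norm d))"
        using n1 nu_pos by (meson mult_left_mono less_imp_le order_trans)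
      moreover have "\<nu> * norm (eps (x (T + j)) b) \<le> \<nu> * E" using n3 nu_pos by (simp add: mult_left_mono)
      ultimately show ?thesis by simp
    qed
    also have "\<dots> = q * norm d + \<nu> * L * C"
      unfolding q_def C_def using L_pos by (simp add: field_simps)
    also have "\<dots> \<le> q * (C * (q ^ j - 1)) + \<nu> * L * C"
      using IH q1 by (simp add: mult_left_mono)
    also have "\<dots> = C * (q ^ Suc j - 1)"
      unfolding q_def by (simp add: algebra_simps)
    finally show ?case .
  qed
  have "norm (x 0 - x (2*T)) = norm (x (T + T) - x (T - T))"
    by (simp add: norm_minus_commute mult_2)
  also have "\<dots> \<le> C * (q ^ T - 1)" using main[of T] by simp
  also have "\<dots> \<le> C * (exp (real T * L * \<nu>) - 1)"
  proof -
    have "q ^ T \<le> exp (\<nu> * L) ^ T"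
      unfolding q_def using nu_pos L_pos
      by (intro power_mono) (auto simp: add.commute exp_ge_add_one_self_aux)
    also have "\<dots> = exp (real T * L * \<nu>)" by (simp add: exp_of_nat_mult[symmetric] mult_ac)
    finally show ?thesis using C0 by (simp add: mult_left_mono)
  qed
  finally show ?thesis unfolding C_def .
qed

end
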